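(* Let $\mu>0$ and $\mathbf{C}>0$, and let all policies be restricted to the class $\Pi_{\mathbf{C}}$ of conditional densities bounded by $\mathbf{C}$ (defined in the context). Then for every bounded value function $V:\mathcal{S}\to\mathbb{R}$ and every $s\in\mathcal{S}$, $$\mathcal{B}_{\mu}V(s)-\mathcal{B}V(s)\in[\mu(1-\mathbf{C}),\,\mu].$$
   Context: Consider a Markov decision process with state space $\mathcal{S}$, continuous action space $\mathcal{A}\subseteq\mathbb{R}$ (Lebesgue measurable; $\sigma$ denotes Lebesgue measure), transition kernel $\mathbf{P}(\cdot\mid s,a)$, bounded reward function $R(s',s,a)$ and discount factor $\gamma\in[0,1)$. For a bounded $V:\mathcal{S}\to\mathbb{R}$ put $Q_V(s,a)=\mathbb{E}_{S'\sim\mathbf{P}(\cdot\mid s,a)}[R(S',s,a)+\gamma V(S')]$. (Standing assumption) Every policy considered is a conditional probability density $\pi(\cdot\mid s)$ on $\mathcal{A}$ (w.r.t. Lebesgue measure) with $\pi(a\mid s)\le\mathbf{C}$ for all $s,a$; denote this class by $\Pi_{\mathbf{C}}$. The Bellman operator is $\mathcal{B}V(s)=\sup_{\pi\in\Pi_{\mathbf{C}}}\int_{\mathcal{A}}Q_V(s,a)\pi(a\mid s)\,da$, and for $\mu>0$ the quasi-optimal Bellman operator is $$\mathcal{B}_{\mu}V(s)=\sup_{\pi\in\Pi_{\mathbf{C}}}\int_{\mathcal{A}}\Big[Q_V(s,a)\pi(a\mid s)+\mu\big(\pi(a\mid s)-\pi(a\mid s)^2\big)\Big]da .$$ *)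

theory Defs
  imports "HOL-Probability.Probability"
begin

definition Qfun :: "('s \<Rightarrow> real \<Rightarrow> 's measure) \<Rightarrow> ('s \<Rightarrow> 's \<Rightarrow> real \<Rightarrow> real) \<Rightarrow> real
    \<Rightarrow> ('s \<Rightarrow> real) \<Rightarrow> 's \<Rightarrow> real \<Rightarrow> real" where
  "Qfun P R \<gamma> V s a = (\<integral>s'. R s' s a + \<gamma> * V s' \<partial>(P s a))"

definition PiC :: "real set \<Rightarrow> real \<Rightarrow> ('s \<Rightarrow> real \<Rightarrow> real) set" where
  "PiC A C = {\<pi>. \<forall>s. set_integrable lborel A (\<pi> s)
                  \<and> (\<forall>a\<in>A. 0 \<le> \<pi> s a \<and> \<pi> s a \<le> C)
                  \<and> (\<integral>a\<in>A. \<pi> s a \<partial>lborel) = 1}"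

definition bellman :: "('s \<Rightarrow> real \<Rightarrow> 's measure) \<Rightarrow> ('s \<Rightarrow> 's \<Rightarrow> real \<Rightarrow> real) \<Rightarrow> real
    \<Rightarrow> real set \<Rightarrow> real \<Rightarrow> ('s \<Rightarrow> real) \<Rightarrow> 's \<Rightarrow> real" where
  "bellman P R \<gamma> A C V s =
     (SUP \<pi>\<in>PiC A C. \<integral>a\<in>A. Qfun P R \<gamma> V s a * \<pi> s a \<partial>lborel)"

definition qbellman :: "real \<Rightarrow> ('s \<Rightarrow> real \<Rightarrow> 's measure) \<Rightarrow> ('s \<Rightarrow> 's \<Rightarrow> real \<Rightarrow> real) \<Rightarrow> real
    \<Rightarrow> real set \<Rightarrow> real \<Rightarrow> ('s \<Rightarrow> real) \<Rightarrow> 's \<Rightarrow> real" where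
  "qbellman \<mu> P R \<gamma> A C V s =
     (SUP \<pi>\<in>PiC A C. \<integral>a\<in>A. Qfun P R \<gamma> V s a * \<pi> s a + \<mu> * (\<pi> s a - (\<pi> s a)\<^sup>2) \<partial>lborel)"

end

theory Submission
  imports Defs
begin

lemma Qmeas:
  fixes M :: "'s measure" and P :: "'s \<Rightarrow> real \<Rightarrow> 's measure"
    and R :: "'s \<Rightarrow> 's \<Rightarrow> real \<Rightarrow> real"
  assumes kernel: "(\<lambda>(x, a). P x a) \<in> M \<Otimes>\<^sub>M borel \<rightarrow>\<^sub>M prob_algebra M"
    and R_meas: "(\<lambda>(s', x, a). R s' x a) \<in> borel_measurable (M \<Otimes>\<^sub>M M \<Otimes>\<^sub>M borel)"
    and V_meas: "V \<in> borel_measurable M"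
    and s: "s \<in> space M"
  shows "Qfun P R \<gamma> V s \<in> borel_measurable borel"
proof -
  have Pm0: "(\<lambda>a. (\<lambda>(x, a). P x a) (s, a)) \<in> borel \<rightarrow>\<^sub>M subprob_algebra M"
    using measurable_compose[OF measurable_Pair[OF measurable_const[OF s] measurable_ident_sets[OF refl]] measurable_prob_algebraD[OF kernel]] by simp
  have Pm[measurable]: "(\<lambda>a. P s a) \<in> borel \<rightarrow>\<^sub>M subprob_algebra M" using Pm0 by simp
  have hm[measurable]: "(\<lambda>(s', a). R s' s a + \<gamma> * V s') \<in> borel_measurable (M \<Otimes>\<^sub>M borel)"
  proof -
    have "(\<lambda>(s', a). (s', s, a)) \<in> M \<Otimes>\<^sub>M borel \<rightarrow>\<^sub>M M \<Otimes>\<^sub>M M \<Otimes>\<^sub>M borel"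
      using s by measurable
    from measurable_compose[OF this R_meas] have "(\<lambda>(s', a). R s' s a) \<in> borel_measurable (M \<Otimes>\<^sub>M borel)"
      by (simp add: case_prod_beta)
    then show ?thesis using V_meas by measurable
  qed
  have pm: "(\<lambda>(a, s'). (s', a)) \<in> borel \<Otimes>\<^sub>M M \<rightarrow>\<^sub>M M \<Otimes>\<^sub>M borel" by measurable
  have Lm: "(\<lambda>a. distr (P s a) (M \<Otimes>\<^sub>M borel) (\<lambda>s'. (s', a))) \<in> borel \<rightarrow>\<^sub>M subprob_algebra (M \<Otimes>\<^sub>M borel)"
    using measurable_distr2[where f="\<lambda>a s'. (s', a)", OF _ Pm] pm by simp
  have m2: "(\<lambda>a. integral\<^sup>L (distr (P s a) (M \<Otimes>\<^sub>M borel) (\<lambda>s'. (s', a))) (\<lambda>(s', a). R s' s a + \<gamma> * V s')) \<in> borel_measurable borel"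
    using measurable_compose[OF Lm integral_measurable_subprob_algebra[OF hm]] .
  have eq: "integral\<^sup>L (distr (P s a) (M \<Otimes>\<^sub>M borel) (\<lambda>s'. (s', a))) (\<lambda>(s', a). R s' s a + \<gamma> * V s') = Qfun P R \<gamma> V s a" for a
  proof -
    have "P s a \<in> space (subprob_algebra M)" using measurable_space[OF Pm, of a] by simp
    then have se: "sets (P s a) = sets M" by (simp add: space_subprob_algebra)
    have "(\<lambda>s'. (s', a)) \<in> P s a \<rightarrow>\<^sub>M M \<Otimes>\<^sub>M borel"
      using measurable_cong_sets[OF se refl] by measurable
    then show ?thesis unfolding Qfun_def by (subst integral_distr) (auto simp: hm)
  qed
  show ?thesis using m2 unfolding eq .
qed
lemma abs_int_le:
  fixes N :: "'a measure"
  assumes "prob_space N" "\<And>x. \<bar>f x\<bar> \<le> (B::real)" "0 \<le> B"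
  shows "\<bar>integral\<^sup>L N f\<bar> \<le> B"
proof (cases "integrable N f")
  case True
  interpret prob_space N by fact
  have "\<bar>integral\<^sup>L N f\<bar> \<le> integral\<^sup>L N (\<lambda>x. \<bar>f x\<bar>)" by (rule integral_abs_bound)
  also have "\<dots> \<le> integral\<^sup>L N (\<lambda>x. B)" using True assms(2) by (intro integral_mono) auto
  also have "\<dots> = B" by (simp add: prob_space)
  finally show ?thesis .
next
  case False then show ?thesis using assms by (simp add: not_integrable_integral_eq)
qed

lemma pi_facts:
  fixes Q p :: "real \<Rightarrow> real"
  assumes Qm: "Q \<in> borel_measurable borel" and Qb: "\<And>a. \<bar>Q a\<bar> \<le> B"
    and A: "A \<in> sets lborel"
    and pint: "set_integrable lborel A p" and pb: "\<And>a. a \<in> A \<Longrightarrow> 0 \<le> p a \<and> p a \<le> C"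
    and p1: "(\<integral>a\<in>A. p a \<partial>lborel) = 1"
  shows "(\<integral>a\<in>A. Q a * p a \<partial>lborel) \<le> B"
    and "(\<integral>a\<in>A. Q a * p a + \<mu> * (p a - (p a)\<^sup>2) \<partial>lborel) = (\<integral>a\<in>A. Q a * p a \<partial>lborel) + \<mu> * (1 - (\<integral>a\<in>A. (p a)\<^sup>2 \<partial>lborel))"
    and "0 \<le> (\<integral>a\<in>A. (p a)\<^sup>2 \<partial>lborel)"
    and "(\<integral>a\<in>A. (p a)\<^sup>2 \<partial>lborel) \<le> C"
proof -
  have ip: "integrable lborel (\<lambda>a. indicator A a * p a)" using pint by (simp add: set_integrable_def)
  have mp: "(\<lambda>a. indicator A a * p a) \<in> borel_measurable lborel" using ip by auto
  have Qml: "Q \<in> borel_measurable lborel" using Qm by simp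
  have iQp: "set_integrable lborel A (\<lambda>a. Q a * p a)"
    unfolding set_integrable_def
  proof (rule Bochner_Integration.integrable_bound[OF integrable_mult_right[OF ip, of B]])
    have "(\<lambda>a. Q a * (indicator A a * p a)) \<in> borel_measurable lborel" using Qml mp by measurable
    then show "(\<lambda>x. indicat_real A x *\<^sub>R (Q x * p x)) \<in> borel_measurable lborel"
      by (simp add: mult_ac)
    show "AE x in lborel. norm (indicat_real A x *\<^sub>R (Q x * p x)) \<le> norm (B * (indicator A x * p x))"
    proof (rule AE_I2)
      fix x show "norm (indicat_real A x *\<^sub>R (Q x * p x)) \<le> norm (B * (indicator A x * p x))"
        using Qb[of x] pb[of x] by (cases "x \<in> A") (auto simp: abs_mult intro!: mult_right_mono)
    qed
  qed
  have ip2: "set_integrable lborel A (\<lambda>a. (p a)\<^sup>2)"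
    unfolding set_integrable_def
  proof (rule Bochner_Integration.integrable_bound[OF integrable_mult_right[OF ip, of C]])
    have "(\<lambda>a. (indicator A a * p a)\<^sup>2) \<in> borel_measurable lborel" using mp by measurable
    moreover have "(\<lambda>a. (indicator A a * p a)\<^sup>2) = (\<lambda>x. indicat_real A x *\<^sub>R (p x)\<^sup>2)"
      by (auto simp: indicator_def fun_eq_iff)
    ultimately show "(\<lambda>x. indicat_real A x *\<^sub>R (p x)\<^sup>2) \<in> borel_measurable lborel" by simp
    show "AE x in lborel. norm (indicat_real A x *\<^sub>R (p x)\<^sup>2) \<le> norm (C * (indicator A x * p x))"
    proof (rule AE_I2)
      fix x show "norm (indicat_real A x *\<^sub>R (p x)\<^sup>2) \<le> norm (C * (indicator A x * p x))"
        using pb[of x] by (cases "x \<in> A") (auto simp: power2_eq_square intro!: mult_right_mono)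
    qed
  qed
  show "(\<integral>a\<in>A. Q a * p a \<partial>lborel) \<le> B"
  proof -
    have "(\<integral>a\<in>A. Q a * p a \<partial>lborel) \<le> (\<integral>a\<in>A. B * p a \<partial>lborel)"
      using iQp pint Qb pb by (intro set_integral_mono) (auto intro!: mult_right_mono simp: abs_le_iff)
    also have "\<dots> = B" using p1 by simp
    finally show ?thesis .
  qed
  show "(\<integral>a\<in>A. Q a * p a + \<mu> * (p a - (p a)\<^sup>2) \<partial>lborel) = (\<integral>a\<in>A. Q a * p a \<partial>lborel) + \<mu> * (1 - (\<integral>a\<in>A. (p a)\<^sup>2 \<partial>lborel))"
    using iQp pint ip2 p1
    by (simp add: set_integral_add set_integral_diff set_integral_mult_right set_integrable_mult_right)
  show "0 \<le> (\<integral>a\<in>A. (p a)\<^sup>2 \<partial>lborel)"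
    unfolding set_lebesgue_integral_def by (rule Bochner_Integration.integral_nonneg) (auto simp: indicator_def)
  have "(\<integral>a\<in>A. (p a)\<^sup>2 \<partial>lborel) \<le> (\<integral>a\<in>A. C * p a \<partial>lborel)"
    using ip2 pint pb by (intro set_integral_mono) (auto simp: power2_eq_square intro!: mult_right_mono)
  also have "\<dots> = C" using p1 by simp
  finally show "(\<integral>a\<in>A. (p a)\<^sup>2 \<partial>lborel) \<le> C" .
qed
lemma ne_transfer:
  assumes "PiC A C \<noteq> ({}::('b \<Rightarrow> real \<Rightarrow> real) set)"
  shows "PiC A C \<noteq> ({}::('a \<Rightarrow> real \<Rightarrow> real) set)"
proof -
  from assms obtain \<pi>0 :: "'b \<Rightarrow> real \<Rightarrow> real" where p0: "\<pi>0 \<in> PiC A C" by blast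
  have "(\<lambda>_::'a. \<pi>0 undefined) \<in> PiC A C" using p0 unfolding PiC_def by auto
  then show ?thesis by blast
qed

theorem theorem1:
  fixes M :: "'s measure" and P :: "'s \<Rightarrow> real \<Rightarrow> 's measure"
    and R :: "'s \<Rightarrow> 's \<Rightarrow> real \<Rightarrow> real" and \<gamma> \<mu> C :: real
    and A :: "real set" and V :: "'s \<Rightarrow> real" and s :: 's
  assumes kernel: "(\<lambda>(x, a). P x a) \<in> M \<Otimes>\<^sub>M borel \<rightarrow>\<^sub>M prob_algebra M"
    and R_meas: "(\<lambda>(s', x, a). R s' x a) \<in> borel_measurable (M \<Otimes>\<^sub>M M \<Otimes>\<^sub>M borel)"
    and R_bdd: "\<exists>K. \<forall>s' x a. \<bar>R s' x a\<bar> \<le> K"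
    and gamma: "0 \<le> \<gamma>" "\<gamma> < 1"
    and A: "A \<in> sets lborel"
    and mu: "\<mu> > 0" and Cpos: "C > 0"
    and nonempty: "PiC A C \<noteq> {}"
    and V_meas: "V \<in> borel_measurable M"
    and V_bdd: "\<exists>K. \<forall>x. \<bar>V x\<bar> \<le> K"
    and s: "s \<in> space M"
  shows "qbellman \<mu> P R \<gamma> A C V s - bellman P R \<gamma> A C V s \<in> {\<mu> * (1 - C) .. \<mu>}"
proof -
  obtain KR where KR: "\<And>s' x a. \<bar>R s' x a\<bar> \<le> KR" using R_bdd by blast
  obtain KV where KV: "\<And>x. \<bar>V x\<bar> \<le> KV" using V_bdd by blast
  define B where "B = KR + \<gamma> * KV"
  have KR0: "0 \<le> KR" using KR[of s s 0] by simp
  have KV0: "0 \<le> KV" using KV[of s] by simp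
  have B0: "0 \<le> B" unfolding B_def using KR0 KV0 gamma by simp
  define Q where "Q = Qfun P R \<gamma> V s"
  have Qm: "Q \<in> borel_measurable borel" unfolding Q_def by (rule Qmeas[OF kernel R_meas V_meas s])
  have Qb: "\<bar>Q a\<bar> \<le> B" for a
  proof -
    have "(s, a) \<in> space (M \<Otimes>\<^sub>M borel)" using s by (simp add: space_pair_measure)
    from measurable_space[OF kernel this] have "prob_space (P s a)"
      by (simp add: space_prob_algebra)
    moreover have "\<bar>R s' s a + \<gamma> * V s'\<bar> \<le> B" for s'
    proof -
      have "\<bar>\<gamma> * V s'\<bar> \<le> \<gamma> * KV" using KV[of s'] gamma by (simp add: abs_mult mult_left_mono)
      then show ?thesis using KR[of s' s a] unfolding B_def by linarith
    qed
    ultimately show ?thesis unfolding Q_def Qfun_def by (intro abs_int_le B0)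
  qed
  define f where "f \<pi> = (\<integral>a\<in>A. Q a * \<pi> s a \<partial>lborel)" for \<pi> :: "'s \<Rightarrow> real \<Rightarrow> real"
  define g where "g \<pi> = (\<integral>a\<in>A. Q a * \<pi> s a + \<mu> * (\<pi> s a - (\<pi> s a)\<^sup>2) \<partial>lborel)" for \<pi> :: "'s \<Rightarrow> real \<Rightarrow> real"
  have fg: "f \<pi> \<le> B \<and> f \<pi> + \<mu> * (1 - C) \<le> g \<pi> \<and> g \<pi> \<le> f \<pi> + \<mu>" if "\<pi> \<in> PiC A C" for \<pi>
  proof -
    from that have pi: "set_integrable lborel A (\<pi> s)" "\<And>a. a \<in> A \<Longrightarrow> 0 \<le> \<pi> s a \<and> \<pi> s a \<le> C"
      "(\<integral>a\<in>A. \<pi> s a \<partial>lborel) = 1" unfolding PiC_def by auto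
    note F = pi_facts[OF Qm Qb A pi]
    define I where "I = (\<integral>a\<in>A. (\<pi> s a)\<^sup>2 \<partial>lborel)"
    have e: "g \<pi> = f \<pi> + \<mu> * (1 - I)" unfolding f_def g_def I_def by (rule F(2))
    have "\<mu> * I \<le> \<mu> * C" "0 \<le> \<mu> * I" using F(3,4) mu unfolding I_def by (auto intro: mult_left_mono)
    then show ?thesis using e F(1) unfolding f_def by (simp add: algebra_simps)
  qed
  have ne: "PiC A C \<noteq> ({} :: ('s \<Rightarrow> real \<Rightarrow> real) set)" by (rule ne_transfer[OF nonempty])
  have bf: "bdd_above (f ` PiC A C)" using fg by (auto intro!: bdd_aboveI)
  have bg: "bdd_above (g ` PiC A C)" using fg by (intro bdd_aboveI[where M="B + \<mu>"]) (force)
  have q: "qbellman \<mu> P R \<gamma> A C V s = (SUP \<pi>\<in>PiC A C. g \<pi>)"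
    unfolding qbellman_def g_def Q_def ..
  have b: "bellman P R \<gamma> A C V s = (SUP \<pi>\<in>PiC A C. f \<pi>)"
    unfolding bellman_def f_def Q_def ..
  have 1: "(SUP \<pi>\<in>PiC A C. g \<pi>) \<le> (SUP \<pi>\<in>PiC A C. f \<pi>) + \<mu>"
  proof (rule cSUP_least[of "PiC A C :: ('s \<Rightarrow> real \<Rightarrow> real) set" g, OF ne])
    fix \<pi> :: "'s \<Rightarrow> real \<Rightarrow> real" assume "\<pi> \<in> PiC A C"
    then show "g \<pi> \<le> (SUP \<pi>\<in>PiC A C. f \<pi>) + \<mu>" using fg[of \<pi>] cSUP_upper[OF _ bf, of \<pi>] by linarith
  qed
  have 2: "(SUP \<pi>\<in>PiC A C. f \<pi>) \<le> (SUP \<pi>\<in>PiC A C. g \<pi>) - \<mu> * (1 - C)"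
  proof (rule cSUP_least[of "PiC A C :: ('s \<Rightarrow> real \<Rightarrow> real) set" f, OF ne])
    fix \<pi> :: "'s \<Rightarrow> real \<Rightarrow> real" assume "\<pi> \<in> PiC A C"
    then show "f \<pi> \<le> (SUP \<pi>\<in>PiC A C. g \<pi>) - \<mu> * (1 - C)" using fg[of \<pi>] cSUP_upper[OF _ bg, of \<pi>] by linarith
  qed
  show ?thesis unfolding q b using 1 2 by simp
qed


end
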